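(* Let $p$ be an even integer and let $n$ be an odd integer with $n\ge p+1\ge 5$. Then there exists a simple graph of order $n$ and size $\mathrm{ex}(n,K_{1,p})+1$ which contains exactly one copy of $K_{1,p}$.
   Context: All graphs are finite and simple. The order of a graph is its number of vertices and its size is its number of edges. A copy of $H$ in $G$ is a subgraph of $G$ isomorphic to $H$; the number of copies of $H$ in $G$ is the number of distinct subgraphs of $G$ isomorphic to $H$. For a graph $H$ and a positive integer $n$, the Turán number $\mathrm{ex}(n,H)$ is the maximum size of a simple graph of order $n$ containing no copy of $H$. $K_{1,p}$ denotes the star with $p$ edges (order $p+1$). *)

theory Defs
  imports Main
begin

definition sgraph :: "'a set \<Rightarrow> 'a set set \<Rightarrow> bool" where
  "sgraph V E \<longleftrightarrow> finite V \<and> (\<forall>e\<in>E. e \<subseteq> V \<and> card e = 2)"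

definition graph_iso :: "'a set \<Rightarrow> 'a set set \<Rightarrow> 'b set \<Rightarrow> 'b set set \<Rightarrow> bool" where
  "graph_iso V1 E1 V2 E2 \<longleftrightarrow>
     (\<exists>f. bij_betw f V1 V2 \<and> (\<forall>x\<in>V1. \<forall>y\<in>V1. {x, y} \<in> E1 \<longleftrightarrow> {f x, f y} \<in> E2))"

definition copies :: "'a set \<Rightarrow> 'a set set \<Rightarrow> 'b set \<Rightarrow> 'b set set \<Rightarrow> ('a set \<times> 'a set set) set" where
  "copies V E W F = {(V', E'). V' \<subseteq> V \<and> E' \<subseteq> E \<and> sgraph V' E' \<and> graph_iso V' E' W F}"

text \<open>Turan number: graphs of order n are taken (w.l.o.g.) on vertex set {0..<n}.\<close>
definition ex_num :: "nat \<Rightarrow> 'b set \<Rightarrow> 'b set set \<Rightarrow> nat" where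
  "ex_num n W F = Max {card E | E :: nat set set. sgraph {0..<n} E \<and> copies {0..<n} E W F = {}}"

definition star_V :: "nat \<Rightarrow> nat set" where
  "star_V p = {0..p}"

definition star_E :: "nat \<Rightarrow> nat set set" where
  "star_E p = {{0, i} | i. i \<in> {1..p}}"

end

theory Submission
  imports Defs
begin


definition nbr :: "'a set set \<Rightarrow> 'a \<Rightarrow> 'a set" where
  "nbr E c = {x. {c,x} \<in> E}"

lemma sgraph_finE: "sgraph V E \<Longrightarrow> finite E"
  unfolding sgraph_def by (meson Pow_iff finite_Pow_iff rev_finite_subset subsetI)

lemma nbr_sub: "sgraph V E \<Longrightarrow> x \<in> nbr E c \<Longrightarrow> x \<in> V \<and> c \<in> V \<and> x \<noteq> c"
proof -
  assume sg: "sgraph V E" and x: "x \<in> nbr E c"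
  then have e: "{c,x} \<in> E" unfolding nbr_def by simp
  then have "{c,x} \<subseteq> V" "card {c,x} = 2" using sg unfolding sgraph_def by auto
  moreover have "x \<noteq> c" using \<open>card {c,x} = 2\<close> by (cases "x = c") auto
  ultimately show ?thesis by auto
qed

lemma nbr_fin: "sgraph V E \<Longrightarrow> finite (nbr E c)"
proof -
  assume sg: "sgraph V E"
  then have "nbr E c \<subseteq> V" using nbr_sub[OF sg] by blast
  moreover have "finite V" using sg sgraph_def by blast
  ultimately show ?thesis using finite_subset by blast
qed

lemma star_E_mem: "{a,b} \<in> star_E p \<longleftrightarrow> (\<exists>i\<in>{1..p}. {a,b} = {0,i})"
  unfolding star_E_def mem_Collect_eq by blast

lemma star_E_mem2: "({a, b} \<in> star_E p) \<longleftrightarrow> (a = (0::nat) \<and> b \<in> {1..p}) \<or> (b = 0 \<and> a \<in> {1..p})"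
  unfolding star_E_mem doubleton_eq_iff by auto

lemma copy_of_star:
  assumes sg: "sgraph V E" and S: "S \<subseteq> nbr E c" "card S = p" "c \<notin> S" and c: "c \<in> V"
  shows "(insert c S, {{c,x}|x. x\<in>S}) \<in> copies V E (star_V p) (star_E p)"
proof -
  have fS: "finite S" using S nbr_fin[OF sg] finite_subset by blast
  obtain g where g: "bij_betw g S {1..p}"
    using finite_same_card_bij[OF fS, of "{1..p}"] S by auto
  define f where "f = (\<lambda>x. if x = c then 0 else g x)"
  have fS': "bij_betw f S {1..p}" using g S(3) unfolding f_def
    by (smt (verit, best) bij_betw_cong)
  have bf: "bij_betw f (insert c S) {0..p}"
  proof -
    have i: "inj_on f S" "f ` S = {1..p}" using fS' unfolding bij_betw_def by auto
    have "f c = 0" unfolding f_def by simp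
    then have "f ` insert c S = {0..p}" using i by auto
    moreover have "inj_on f (insert c S)" using i \<open>f c = 0\<close> by (auto, metis atLeastAtMost_iff image_eqI not_one_le_zero)
    ultimately show ?thesis unfolding bij_betw_def by simp
  qed
  have f0: "\<And>x. x \<in> insert c S \<Longrightarrow> f x = 0 \<longleftrightarrow> x = c"
    using g unfolding f_def bij_betw_def by force
  have f1: "\<And>x. x \<in> S \<Longrightarrow> f x \<in> {1..p}" using fS' bij_betwE by blast
  have iso: "\<forall>x\<in>insert c S. \<forall>y\<in>insert c S. {x,y} \<in> {{c,x}|x. x\<in>S} \<longleftrightarrow> {f x, f y} \<in> star_E p"
  proof (intro ballI)
    fix x y assume x: "x \<in> insert c S" and y: "y \<in> insert c S"
    have "{x,y} \<in> {{c,x}|x. x\<in>S} \<longleftrightarrow> (x = c \<and> y \<in> S) \<or> (y = c \<and> x \<in> S)"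
      by (auto simp: doubleton_eq_iff)
    moreover have "{f x, f y} \<in> star_E p \<longleftrightarrow> (x = c \<and> y \<in> S) \<or> (y = c \<and> x \<in> S)"
    proof -
      have fc: "f c = 0" unfolding f_def by simp
      have A: "{f x, f y} \<in> star_E p \<longleftrightarrow> (f x = 0 \<and> f y \<in> {1..p}) \<or> (f y = 0 \<and> f x \<in> {1..p})"
        by (rule star_E_mem2)
      have B: "f x \<in> {1..p} \<longleftrightarrow> x \<in> S" using x f1 fc by auto
      have C: "f y \<in> {1..p} \<longleftrightarrow> y \<in> S" using y f1 fc by auto
      show ?thesis unfolding A B C by (simp add: f0[OF x] f0[OF y])
    qed
    ultimately show "{x,y} \<in> {{c,x}|x. x\<in>S} \<longleftrightarrow> {f x, f y} \<in> star_E p" by simp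
  qed
  have "sgraph (insert c S) {{c,x}|x. x\<in>S}"
    unfolding sgraph_def using fS S(3) by (auto simp: card_insert_if)
  moreover have "insert c S \<subseteq> V" using S(1) c nbr_sub[OF sg] by auto
  moreover have "{{c,x}|x. x\<in>S} \<subseteq> E" using S(1) unfolding nbr_def by auto
  ultimately show ?thesis unfolding copies_def graph_iso_def star_V_def using bf iso by blast
qed

lemma copy_form:
  assumes "(V',E') \<in> copies V E (star_V p) (star_E p)"
  shows "\<exists>c S. V' = insert c S \<and> c \<notin> S \<and> card S = p \<and> S \<subseteq> nbr E c \<and> E' = {{c,x}|x. x\<in>S}"
proof -
  from assms obtain f where sub: "V' \<subseteq> V" "E' \<subseteq> E" and sg: "sgraph V' E'"
    and bf: "bij_betw f V' {0..p}"
    and iso: "\<forall>x\<in>V'. \<forall>y\<in>V'. {x,y} \<in> E' \<longleftrightarrow> {f x, f y} \<in> star_E p"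
    unfolding copies_def graph_iso_def star_V_def by auto
  obtain c where c: "c \<in> V'" "f c = 0" using bf by (metis atLeastAtMost_iff bij_betwE bij_betw_iff_bijections le0)
  define S where "S = V' - {c}"
  have fin: "finite V'" using sg sgraph_def by blast
  have cV: "card V' = p + 1" using bij_betw_same_card[OF bf] by simp
  have cS: "card S = p" unfolding S_def using cV c fin by simp
  have inj: "inj_on f V'" using bf bij_betw_def by blast
  have fx: "\<And>x. x \<in> S \<Longrightarrow> f x \<in> {1..p}"
  proof -
    fix x assume "x \<in> S"
    then have "x \<in> V'" "x \<noteq> c" unfolding S_def by auto
    then have "f x \<noteq> 0" "f x \<in> {0..p}" using inj c bf bij_betwE by (metis inj_on_eq_iff, blast)
    then show "f x \<in> {1..p}" by auto
  qed
  have edge: "\<And>x. x \<in> S \<Longrightarrow> {c,x} \<in> E'"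
  proof -
    fix x assume x: "x \<in> S"
    then have xV: "x \<in> V'" unfolding S_def by simp
    have "{f c, f x} \<in> star_E p" unfolding star_E_mem2 using c(2) fx[OF x] by simp
    then show "{c,x} \<in> E'" using iso c(1) xV by blast
  qed
  have E'eq: "E' = {{c,x}|x. x\<in>S}"
  proof
    show "{{c,x}|x. x\<in>S} \<subseteq> E'" using edge by auto
  next
    show "E' \<subseteq> {{c,x}|x. x\<in>S}"
    proof
      fix e assume e: "e \<in> E'"
      then have "e \<subseteq> V'" "card e = 2" using sg e unfolding sgraph_def by auto
      then obtain x y where xy: "e = {x,y}" "x \<noteq> y" "x \<in> V'" "y \<in> V'" by (auto simp: card_2_iff)
      then have "{f x, f y} \<in> star_E p" using iso e by auto
      then obtain i where "i \<in> {1..p}" "{f x, f y} = {0,i}" using star_E_mem by blast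
      then have "f x = 0 \<or> f y = 0" by (auto simp: doubleton_eq_iff)
      then have "x = c \<or> y = c" using inj c xy by (metis inj_on_eq_iff)
      then show "e \<in> {{c,x}|x. x\<in>S}" using xy unfolding S_def by auto
    qed
  qed
  have "S \<subseteq> nbr E c" using edge sub unfolding nbr_def by auto
  moreover have "V' = insert c S" using c unfolding S_def by auto
  ultimately show ?thesis using cS E'eq unfolding S_def by blast
qed

lemma deg_eq:
  assumes sg: "sgraph V E" shows "card (nbr E v) = card {e\<in>E. v\<in>e}"
proof -
  have "bij_betw (\<lambda>x. {v,x}) (nbr E v) {e\<in>E. v\<in>e}"
  proof (rule bij_betw_imageI)
    show "inj_on (\<lambda>x. {v,x}) (nbr E v)" by (auto simp: inj_on_def doubleton_eq_iff)
    show "(\<lambda>x. {v,x}) ` nbr E v = {e\<in>E. v\<in>e}"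
    proof
      show "(\<lambda>x. {v,x}) ` nbr E v \<subseteq> {e\<in>E. v\<in>e}" unfolding nbr_def by auto
    next
      show "{e\<in>E. v\<in>e} \<subseteq> (\<lambda>x. {v,x}) ` nbr E v"
      proof
        fix e assume e: "e \<in> {e\<in>E. v\<in>e}"
        then have "card e = 2" using sg sgraph_def by auto
        then obtain a b where "e = {a,b}" by (auto simp: card_2_iff)
        then have "e = {v, if a = v then b else a}" using e by auto
        then show "e \<in> (\<lambda>x. {v,x}) ` nbr E v" using e unfolding nbr_def by auto
      qed
    qed
  qed
  then show ?thesis by (rule bij_betw_same_card)
qed

lemma handshake:
  assumes sg: "sgraph V E" shows "(\<Sum>v\<in>V. card (nbr E v)) = 2 * card E"
proof -
  have fV: "finite V" using sg sgraph_def by blast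
  have fE: "finite E" using sgraph_finE[OF sg] .
  have "(\<Sum>v\<in>V. card (nbr E v)) = (\<Sum>v\<in>V. \<Sum>e\<in>E. if v \<in> e then 1 else 0)"
    using deg_eq[OF sg] fE by (simp add: sum.inter_filter[symmetric])
  also have "\<dots> = (\<Sum>e\<in>E. \<Sum>v\<in>V. if v \<in> e then 1 else 0)" by (rule sum.swap)
  also have "\<dots> = (\<Sum>e\<in>E. card e)"
  proof (rule sum.cong)
    fix e assume "e \<in> E"
    then have "e \<subseteq> V" using sg unfolding sgraph_def by blast
    then have "{v\<in>V. v\<in>e} = e" by auto
    have "(\<Sum>v\<in>V. if v \<in> e then 1 else 0) = (\<Sum>v\<in>{v\<in>V. v\<in>e}. (1::nat))"
      by (rule sum.inter_filter[OF fV, of "\<lambda>_. 1" "\<lambda>v. v \<in> e", symmetric])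
    also have "\<dots> = card e" using \<open>{v\<in>V. v\<in>e} = e\<close> by simp
    finally show "(\<Sum>v\<in>V. if v \<in> e then 1 else 0) = card e" .
  qed simp
  also have "\<dots> = (\<Sum>e\<in>E. 2)" using sg sgraph_def by (intro sum.cong) auto
  finally show ?thesis by simp
qed



locale cst = fixes n k r :: nat assumes nk: "n = 2*k+1" and r1: "1 \<le> r" and rk: "r+1 \<le> k"
begin

definition dl where "dl x y = (if x \<le> y then y - x else y + n - x)"
definition T where "T = {1..r} \<union> {n-r..n-1}"
definition Tx where "Tx x = T \<union> (if x \<le> k then {k+1} else {}) \<union> (if x = 0 \<or> k+1 \<le> x then {k} else {})"
definition adj where "adj x y \<longleftrightarrow> x<n \<and> y<n \<and> dl x y \<in> Tx x"
definition EE where "EE = {{x,y} | x y. adj x y}"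

lemma Tx_iff: "d \<in> Tx x \<longleftrightarrow> (1 \<le> d \<and> d \<le> r) \<or> (n-r \<le> d \<and> d \<le> n-1) \<or> (x \<le> k \<and> d = k+1) \<or> ((x = 0 \<or> k+1 \<le> x) \<and> d = k)"
  unfolding Tx_def T_def by auto

lemma adj_irr: "\<not> adj x x"
  using nk r1 rk unfolding adj_def Tx_iff dl_def by auto

lemma adj_sym: "adj x y \<Longrightarrow> adj y x"
proof -
  assume a: "adj x y"
  show ?thesis
  proof (cases "x < y")
    case True
    have d1: "dl x y = y - x" and d2: "dl y x = x + n - y" using True unfolding dl_def by auto
    from a have h: "x<n" "y<n" "(1 \<le> y - x \<and> y - x \<le> r) \<or> (n-r \<le> y - x \<and> y - x \<le> n-1) \<or> (x \<le> k \<and> y - x = k+1) \<or> ((x = 0 \<or> k+1 \<le> x) \<and> y - x = k)"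
      unfolding adj_def Tx_iff d1 by auto
    have "(1 \<le> x + n - y \<and> x + n - y \<le> r) \<or> (n-r \<le> x + n - y \<and> x + n - y \<le> n-1) \<or> (y \<le> k \<and> x + n - y = k+1) \<or> ((y = 0 \<or> k+1 \<le> y) \<and> x + n - y = k)"
      using h nk r1 rk True by linarith
    then show ?thesis unfolding adj_def Tx_iff d2 using h by simp
  next
    case False
    have "x \<noteq> y" using a adj_irr by auto
    then have d1: "dl x y = y + n - x" and d2: "dl y x = x - y" using False unfolding dl_def by auto
    from a have h: "x<n" "y<n" "(1 \<le> y + n - x \<and> y + n - x \<le> r) \<or> (n-r \<le> y + n - x \<and> y + n - x \<le> n-1) \<or> (x \<le> k \<and> y + n - x = k+1) \<or> ((x = 0 \<or> k+1 \<le> x) \<and> y + n - x = k)"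
      unfolding adj_def Tx_iff d1 by auto
    have "(1 \<le> x - y \<and> x - y \<le> r) \<or> (n-r \<le> x - y \<and> x - y \<le> n-1) \<or> (y \<le> k \<and> x - y = k+1) \<or> ((y = 0 \<or> k+1 \<le> y) \<and> x - y = k)"
      using h nk r1 rk False by linarith
    then show ?thesis unfolding adj_def Tx_iff d2 using h by simp
  qed
qed


lemma EE_iff: "{x,y} \<in> EE \<longleftrightarrow> adj x y"
  unfolding EE_def using adj_sym by (auto simp: doubleton_eq_iff)

lemma sg: "sgraph {0..<n} EE"
proof -
  have "\<And>x y. adj x y \<Longrightarrow> {x,y} \<subseteq> {0..<n} \<and> card {x,y} = 2"
  proof -
    fix x y assume a: "adj x y"
    then have "x \<noteq> y" using adj_irr by auto
    then show "{x,y} \<subseteq> {0..<n} \<and> card {x,y} = 2" using a unfolding adj_def by auto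
  qed
  then show ?thesis unfolding sgraph_def EE_def by auto
qed

lemma nbr_eq: "nbr EE x = {y. y < n \<and> dl x y \<in> Tx x \<and> x < n}"
  unfolding nbr_def EE_iff adj_def by auto

lemma card_nbr: assumes x: "x < n" shows "card (nbr EE x) = card (Tx x)"
proof -
  have "bij_betw (\<lambda>d. if x + d < n then x + d else x + d - n) (Tx x) (nbr EE x)"
  proof (rule bij_betw_imageI)
    show "inj_on (\<lambda>d. if x + d < n then x + d else x + d - n) (Tx x)"
    proof (rule inj_onI)
      fix a b assume a: "a \<in> Tx x" and b: "b \<in> Tx x"
        and eq: "(if x + a < n then x + a else x + a - n) = (if x + b < n then x + b else x + b - n)"
      have "a < n" "b < n" using a b nk r1 rk unfolding Tx_iff by auto
      then show "a = b" using eq x by (auto split: if_splits)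
    qed
    show "(\<lambda>d. if x + d < n then x + d else x + d - n) ` Tx x = nbr EE x"
    proof
      show "(\<lambda>d. if x + d < n then x + d else x + d - n) ` Tx x \<subseteq> nbr EE x"
      proof
        fix y assume "y \<in> (\<lambda>d. if x + d < n then x + d else x + d - n) ` Tx x"
        then obtain d where d: "d \<in> Tx x" "y = (if x + d < n then x + d else x + d - n)" by auto
        have "d < n" "1 \<le> d" using d(1) unfolding Tx_iff using nk r1 rk by auto
        then have "y < n" "dl x y = d" using d(2) x unfolding dl_def by auto
        then show "y \<in> nbr EE x" unfolding nbr_eq using d(1) x by auto
      qed
    next
      show "nbr EE x \<subseteq> (\<lambda>d. if x + d < n then x + d else x + d - n) ` Tx x"
      proof
        fix y assume y: "y \<in> nbr EE x"
        then have "y < n" "dl x y \<in> Tx x" unfolding nbr_eq by auto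
        moreover have "y = (if x + dl x y < n then x + dl x y else x + dl x y - n)"
          using \<open>y < n\<close> x unfolding dl_def by auto
        ultimately show "y \<in> (\<lambda>d. if x + d < n then x + d else x + d - n) ` Tx x" by blast
      qed
    qed
  qed
  then show ?thesis by (simp add: bij_betw_same_card)
qed

lemma card_T: "card T = 2*r"
proof -
  have "{1..r} \<inter> {n-r..n-1} = {}" using nk rk by auto
  moreover have "card {n-r..n-1} = r" using nk rk by auto
  ultimately show ?thesis unfolding T_def by (simp add: card_Un_disjoint)
qed

lemma kT: "k \<notin> T" "k+1 \<notin> T" unfolding T_def using nk rk r1 by auto

lemma card_Tx: "card (Tx x) = (if x = 0 then 2*r+2 else 2*r+1)"
proof -
  have fT: "finite T" unfolding T_def by auto
  show ?thesis
  proof (cases "x = 0")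
    case True
    then have "Tx x = insert k (insert (k+1) T)" unfolding Tx_def by auto
    then show ?thesis using True kT fT card_T by simp
  next
    case False
    show ?thesis
    proof (cases "x \<le> k")
      case True
      then have "Tx x = insert (k+1) T" using False unfolding Tx_def by auto
      then show ?thesis using False kT fT card_T by simp
    next
      case F2: False
      then have "Tx x = insert k T" using False unfolding Tx_def by auto
      then show ?thesis using False kT fT card_T by simp
    qed
  qed
qed

lemma deg: "x < n \<Longrightarrow> card (nbr EE x) = (if x = 0 then 2*r+2 else 2*r+1)"
  using card_nbr card_Tx by simp

lemma cardEE: "2 * card EE = n*(2*r+1) + 1"
proof -
  have "2 * card EE = (\<Sum>v\<in>{0..<n}. card (nbr EE v))" using handshake[OF sg] by simp
  also have "\<dots> = (\<Sum>v\<in>{0..<n}. (2*r+1) + (if v = 0 then 1 else 0))"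
    by (rule sum.cong) (auto simp: deg)
  also have "\<dots> = (\<Sum>v\<in>{0..<n}. (2*r+1::nat)) + (\<Sum>v\<in>{0..<n}. if v = 0 then 1 else 0)"
    by (rule sum.distrib)
  also have "(\<Sum>v\<in>{0..<n}. if v = 0 then 1 else 0) = (1::nat)" using nk by (simp add: sum.delta)
  also have "(\<Sum>v\<in>{0..<n}. (2*r+1::nat)) = n*(2*r+1)" by simp
  finally show ?thesis .
qed

end


lemma copies_deg:
  assumes sg: "sgraph V E" and p: "1 \<le> p" and c: "(V',E') \<in> copies V E (star_V p) (star_E p)"
  shows "\<exists>c\<in>V. p \<le> card (nbr E c)"
proof -
  obtain c S where S: "card S = p" "S \<subseteq> nbr E c" using copy_form[OF c] by blast
  then obtain x where "x \<in> S" using p by fastforce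
  then have "c \<in> V" using S nbr_sub[OF sg] by blast
  moreover have "p \<le> card (nbr E c)" using S card_mono[OF nbr_fin[OF sg]] by metis
  ultimately show ?thesis by blast
qed

lemma starfree_deg:
  assumes sg: "sgraph V E" and cf: "copies V E (star_V p) (star_E p) = {}" and v: "v \<in> V"
  shows "card (nbr E v) < p"
proof (rule ccontr)
  assume "\<not> card (nbr E v) < p"
  then obtain S where S: "S \<subseteq> nbr E v" "card S = p" by (meson not_less obtain_subset_with_card_n)
  have "v \<notin> S" using S nbr_sub[OF sg] by blast
  then show False using copy_of_star[OF sg S(1) S(2) _ v] cf by blast
qed

lemma ex_upper:
  assumes sg: "sgraph {0..<n} E" and cf: "copies {0..<n} E (star_V p) (star_E p) = {}"
  shows "2 * card E \<le> n * (p - 1)"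
proof -
  have "2 * card E = (\<Sum>v\<in>{0..<n}. card (nbr E v))" using handshake[OF sg] by simp
  also have "\<dots> \<le> (\<Sum>v\<in>{0..<n}. p - 1)"
    by (rule sum_mono) (use starfree_deg[OF sg cf] in fastforce)
  finally show ?thesis by simp
qed

context cst begin

lemma copies_EE: "copies {0..<n} EE (star_V (2*r+2)) (star_E (2*r+2)) =
   {(insert 0 (nbr EE 0), {{0,x}|x. x \<in> nbr EE 0})}"
proof
  have "0 \<notin> nbr EE 0" using nbr_sub[OF sg] by blast
  moreover have "(0::nat) \<in> {0..<n}" using nk by simp
  ultimately show "{(insert 0 (nbr EE 0), {{0,x}|x. x \<in> nbr EE 0})} \<subseteq> copies {0..<n} EE (star_V (2*r+2)) (star_E (2*r+2))"
    using copy_of_star[OF sg, of "nbr EE 0" 0 "2*r+2"] deg[of 0] by simp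
next
  show "copies {0..<n} EE (star_V (2*r+2)) (star_E (2*r+2)) \<subseteq> {(insert 0 (nbr EE 0), {{0,x}|x. x \<in> nbr EE 0})}"
  proof
    fix C assume C: "C \<in> copies {0..<n} EE (star_V (2*r+2)) (star_E (2*r+2))"
    obtain V' E' where C': "C = (V',E')" by force
    from C C' have "(V',E') \<in> copies {0..<n} EE (star_V (2*r+2)) (star_E (2*r+2))" by simp
    from copy_form[OF this] obtain c S where cS: "V' = insert c S" "c \<notin> S" "card S = 2*r+2" "S \<subseteq> nbr EE c"
      "E' = {{c,x}|x. x\<in>S}" by blast
    then obtain x where "x \<in> S" by fastforce
    then have cn: "c < n" using cS nbr_sub[OF sg] by fastforce
    have le: "card S \<le> card (nbr EE c)" using cS card_mono[OF nbr_fin[OF sg]] by metis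
    then have c0: "c = 0" using deg[OF cn] cS(3) by (auto split: if_splits)
    have n0: "0 < n" using nk by simp
    have "card (nbr EE 0) = 2*r+2" using deg[OF n0] by simp
    then have "S = nbr EE 0" using card_subset_eq[OF nbr_fin[OF sg], of S] cS(3,4) c0 by simp
    then show "C \<in> {(insert 0 (nbr EE 0), {{0,x}|x. x \<in> nbr EE 0})}" using C' cS c0 by simp
  qed
qed

lemma card_copies_EE: "card (copies {0..<n} EE (star_V (2*r+2)) (star_E (2*r+2))) = 1"
  using copies_EE by simp

lemma witness: "\<exists>E0. sgraph {0..<n} E0 \<and> copies {0..<n} E0 (star_V (2*r+2)) (star_E (2*r+2)) = {}
   \<and> card E0 + 1 = card EE"
proof -
  have "card (nbr EE 0) = 2*r+2" using deg[of 0] nk by simp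
  then obtain v where v: "v \<in> nbr EE 0" by fastforce
  define E0 where "E0 = EE - {{0,v}}"
  have sg0: "sgraph {0..<n} E0" using sg unfolding E0_def sgraph_def by auto
  have deg0: "\<And>x. x < n \<Longrightarrow> card (nbr E0 x) < 2*r+2"
  proof -
    fix x assume x: "x < n"
    show "card (nbr E0 x) < 2*r+2"
    proof (cases "x = 0")
      case True
      have "nbr E0 x \<subseteq> nbr EE 0 - {v}" using True unfolding E0_def nbr_def by auto
      then have "card (nbr E0 x) \<le> card (nbr EE 0 - {v})"
        using nbr_fin[OF sg] by (meson card_mono finite_Diff)
      also have "\<dots> = 2*r+1" using v \<open>card (nbr EE 0) = 2*r+2\<close> nbr_fin[OF sg] by simp
      finally show ?thesis by simp
    next
      case False
      have "nbr E0 x \<subseteq> nbr EE x" unfolding E0_def nbr_def by auto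
      then have "card (nbr E0 x) \<le> card (nbr EE x)" using nbr_fin[OF sg] card_mono by metis
      then show ?thesis using deg[OF x] False by simp
    qed
  qed
  have cf: "copies {0..<n} E0 (star_V (2*r+2)) (star_E (2*r+2)) = {}"
  proof (rule ccontr)
    assume "copies {0..<n} E0 (star_V (2*r+2)) (star_E (2*r+2)) \<noteq> {}"
    then obtain V' E' where "(V',E') \<in> copies {0..<n} E0 (star_V (2*r+2)) (star_E (2*r+2))" by auto
    then obtain c where "c \<in> {0..<n}" "2*r+2 \<le> card (nbr E0 c)" using copies_deg[OF sg0] by fastforce
    then show False using deg0 by force
  qed
  have "{0,v} \<in> EE" using v unfolding nbr_def by simp
  then have "card E0 + 1 = card EE" unfolding E0_def using sgraph_finE[OF sg]
    by (metis card_Diff_singleton card_gt_0_iff Suc_eq_plus1 Suc_pred' empty_iff)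
  then show ?thesis using sg0 cf by blast
qed

end

theorem theorem1:
  fixes p n :: nat
  assumes "even p" and "odd n" and "n \<ge> p + 1" and "p + 1 \<ge> 5"
  shows "\<exists>E :: nat set set. sgraph {0..<n} E
           \<and> card E = ex_num n (star_V p) (star_E p) + 1
           \<and> card (copies {0..<n} E (star_V p) (star_E p)) = 1"
proof -
  define r where "r = p div 2 - 1"
  define k where "k = n div 2"
  have p: "p = 2*r+2" using assms(1,4) unfolding r_def by auto
  have nk: "n = 2*k+1" using assms(2) unfolding k_def by (metis odd_two_times_div_two_succ)
  interpret cst n k r
    by unfold_locales (use nk p assms in auto)
  define K where "K = n*(2*r+1) div 2"
  have K: "2*K+1 = n*(2*r+1)" unfolding K_def using nk assms(2) odd_two_times_div_two_succ[of "n*(2*r+1)"] by simp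
  define A where "A = {card E | E :: nat set set. sgraph {0..<n} E \<and> copies {0..<n} E (star_V p) (star_E p) = {}}"
  have finA: "finite A"
  proof (rule finite_subset)
    show "A \<subseteq> card ` Pow (Pow {0..<n})" unfolding A_def sgraph_def by auto
  qed simp
  have up: "\<And>y. y \<in> A \<Longrightarrow> y \<le> K"
  proof -
    fix y assume "y \<in> A"
    then obtain E where E: "y = card E" "sgraph {0..<n} E" "copies {0..<n} E (star_V p) (star_E p) = {}"
      unfolding A_def by blast
    have "2 * y \<le> n * (p - 1)" using ex_upper[OF E(2,3)] E(1) by simp
    then show "y \<le> K" using K p by simp
  qed
  obtain E0 where E0: "sgraph {0..<n} E0" "copies {0..<n} E0 (star_V p) (star_E p) = {}"
    "card E0 + 1 = card EE" using witness p by blast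
  have cEE: "card EE = K + 1" using cardEE K by simp
  have "K \<in> A" unfolding A_def using E0 cEE by auto
  then have ex: "ex_num n (star_V p) (star_E p) = K"
    unfolding ex_num_def A_def[symmetric] using Max_eqI[OF finA up] by blast
  show ?thesis using sg cEE ex card_copies_EE p by auto
qed

end
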